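(* The set of covectors $\mathcal L$ of a finitary affine oriented matroid $(E,\mathcal L)$ is countable.
   Context: A sign vector on a set $E$ is an element of $\{+,-,0\}^E$; $-X$ is defined by $(-X)(e)=-X(e)$. The zero set is $z(X)=\{e:X(e)=0\}$. The separator of $X,Y$ is $S(X,Y)=\{e\in E: X(e)\neq0\neq Y(e),\ X(e)\neq Y(e)\}$. The composition $X\circ Y$ is given by $(X\circ Y)(e)=X(e)$ if $X(e)\neq0$ and $Y(e)$ otherwise; $X\oplus Y$ is $0$ on $S(X,Y)$ and equals $X\circ Y$ elsewhere. For sets of sign vectors, $\mathcal A\circ\mathcal B=\{X\circ Y:X\in\mathcal A,Y\in\mathcal B\}$, $-\mathcal A=\{-X:X\in\mathcal A\}$. Sign vectors are partially ordered componentwise via $0<+$, $0<-$ ($+$ and $-$ incomparable). For $\mathcal L\subseteq\{+,-,0\}^E$ let $I_e(X,Y;\mathcal L)=\{Z\in\mathcal L:Z(e)=0,\ Z(f)=(X\circ Y)(f)\ \forall f\notin S(X,Y)\}$, $I(X,Y;\mathcal L)=\bigcup_{e\in S(X,Y)}I_e(X,Y;\mathcal L)$ and $\mathcal P(\mathcal L)=\{X\oplus(-Y):X,Y\in\mathcal L,\ I(X,-Y;\mathcal L)=I(-X,Y;\mathcal L)=\emptyset\}$. A finitary affine oriented matroid (FAOM) is a pair $(E,\mathcal L)$, $\mathcal L\subseteq\{+,-,0\}^E$, satisfying (S) $|S(X,Y)|<\infty$ for $X,Y\in\mathcal L$; (Z) $|z(X)|<\infty$ for $X\in\mathcal L$;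 (I) $\{Y\in\mathcal L:Y\le X\}$ is finite for each $X\in\mathcal L$; (FS) $\mathcal L\circ(-\mathcal L)\subseteq\mathcal L$; (SE) for all $X,Y\in\mathcal L$ and $e\in S(X,Y)$, $I_e(X,Y;\mathcal L)\ne\emptyset$; (P) $\mathcal P(\mathcal L)\circ\mathcal L\subseteq\mathcal L$. *)

theory Defs
  imports Main "HOL-Library.Countable_Set"
begin

datatype sign = Zero | Pos | Neg

fun sneg :: "sign \<Rightarrow> sign" where
  "sneg Zero = Zero" | "sneg Pos = Neg" | "sneg Neg = Pos"

text \<open>Sign vectors on the ground set E, where E is the universe of the type 'e.\<close>
type_synonym 'e signvec = "'e \<Rightarrow> sign"

definition sv_neg :: "'e signvec \<Rightarrow> 'e signvec" where
  "sv_neg X = (\<lambda>e. sneg (X e))"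

definition zset :: "'e signvec \<Rightarrow> 'e set" where
  "zset X = {e. X e = Zero}"

definition sep :: "'e signvec \<Rightarrow> 'e signvec \<Rightarrow> 'e set" where
  "sep X Y = {e. X e \<noteq> Zero \<and> Y e \<noteq> Zero \<and> X e \<noteq> Y e}"

definition comp :: "'e signvec \<Rightarrow> 'e signvec \<Rightarrow> 'e signvec" where
  "comp X Y = (\<lambda>e. if X e \<noteq> Zero then X e else Y e)"

definition sv_oplus :: "'e signvec \<Rightarrow> 'e signvec \<Rightarrow> 'e signvec" where
  "sv_oplus X Y = (\<lambda>e. if e \<in> sep X Y then Zero else comp X Y e)"

definition set_comp :: "'e signvec set \<Rightarrow> 'e signvec set \<Rightarrow> 'e signvec set" where
  "set_comp A B = {comp X Y | X Y. X \<in> A \<and> Y \<in> B}"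

definition set_neg :: "'e signvec set \<Rightarrow> 'e signvec set" where
  "set_neg A = sv_neg ` A"

definition sv_le :: "'e signvec \<Rightarrow> 'e signvec \<Rightarrow> bool" where
  "sv_le X Y = (\<forall>e. X e = Zero \<or> X e = Y e)"

definition Ie :: "'e \<Rightarrow> 'e signvec \<Rightarrow> 'e signvec \<Rightarrow> 'e signvec set \<Rightarrow> 'e signvec set" where
  "Ie e X Y L = {Z \<in> L. Z e = Zero \<and> (\<forall>f. f \<notin> sep X Y \<longrightarrow> Z f = comp X Y f)}"

definition II :: "'e signvec \<Rightarrow> 'e signvec \<Rightarrow> 'e signvec set \<Rightarrow> 'e signvec set" where
  "II X Y L = (\<Union>e\<in>sep X Y. Ie e X Y L)"

definition PP :: "'e signvec set \<Rightarrow> 'e signvec set" where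
  "PP L = {sv_oplus X (sv_neg Y) | X Y. X \<in> L \<and> Y \<in> L \<and>
             II X (sv_neg Y) L = {} \<and> II (sv_neg X) Y L = {}}"

definition FAOM :: "'e signvec set \<Rightarrow> bool" where
  "FAOM L \<longleftrightarrow>
     (\<forall>X\<in>L. \<forall>Y\<in>L. finite (sep X Y)) \<and>
     (\<forall>X\<in>L. finite (zset X)) \<and>
     (\<forall>X\<in>L. finite {Y \<in> L. sv_le Y X}) \<and>
     set_comp L (set_neg L) \<subseteq> L \<and>
     (\<forall>X\<in>L. \<forall>Y\<in>L. \<forall>e\<in>sep X Y. Ie e X Y L \<noteq> {}) \<and>
     set_comp (PP L) L \<subseteq> L"

end

theory Submission
  imports Defs "HOL-Library.FuncSet"
begin

definition dif :: "'e signvec \<Rightarrow> 'e signvec \<Rightarrow> 'e set" where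
  "dif A B = {f. A f \<noteq> B f}"

definition nb :: "'e signvec set \<Rightarrow> 'e signvec \<Rightarrow> 'e signvec set" where
  "nb L Y = {X \<in> L. sv_le X Y \<or> sv_le Y X}"

definition ball :: "'e signvec set \<Rightarrow> 'e signvec \<Rightarrow> nat \<Rightarrow> 'e signvec set" where
  "ball L A n = {B \<in> L. card (dif A B) < n}"

lemma sign_univ: "(UNIV :: sign set) = {Zero, Pos, Neg}"
  by (auto intro: sign.exhaust)

lemma sneg_opp: "x \<noteq> Zero \<Longrightarrow> y \<noteq> Zero \<Longrightarrow> x \<noteq> y \<Longrightarrow> x = sneg y"
  by (cases x; cases y) auto

lemma sneg_zero[simp]: "(sneg x = Zero) = (x = Zero)"
  by (cases x) auto

lemma FS: "FAOM L \<Longrightarrow> X \<in> L \<Longrightarrow> Y \<in> L \<Longrightarrow> comp X (sv_neg Y) \<in> L"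
  unfolding FAOM_def set_comp_def set_neg_def by blast

lemma up_finite:
  assumes "finite (zset Y)"
  shows "finite {X. sv_le Y X}"
proof -
  have "{X. sv_le Y X} \<subseteq> (\<lambda>g f. if f \<in> zset Y then g f else Y f) ` (PiE (zset Y) (\<lambda>_. UNIV))"
  proof
    fix X assume "X \<in> {X. sv_le Y X}"
    hence le: "sv_le Y X" by simp
    have "X = (\<lambda>f. if f \<in> zset Y then restrict X (zset Y) f else Y f)"
      using le by (auto simp: sv_le_def zset_def fun_eq_iff restrict_def)
    moreover have "restrict X (zset Y) \<in> PiE (zset Y) (\<lambda>_. UNIV)" by simp
    ultimately show "X \<in> (\<lambda>g f. if f \<in> zset Y then g f else Y f) ` (PiE (zset Y) (\<lambda>_. UNIV))"
      by blast
  qed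
  moreover have "finite (PiE (zset Y) (\<lambda>_. UNIV :: sign set))"
    using assms by (intro finite_PiE) (auto simp: sign_univ)
  ultimately show ?thesis using finite_subset by blast
qed

lemma nb_countable:
  assumes "FAOM L" "Y \<in> L"
  shows "countable (nb L Y)"
proof -
  have f1: "finite {X \<in> L. sv_le X Y}" using assms unfolding FAOM_def by blast
  have "finite (zset Y)" using assms unfolding FAOM_def by blast
  hence f2: "finite {X. sv_le Y X}" by (rule up_finite)
  have "nb L Y \<subseteq> {X \<in> L. sv_le X Y} \<union> {X. sv_le Y X}" unfolding nb_def by blast
  hence "finite (nb L Y)" using f1 f2 finite_subset by blast
  thus ?thesis by (rule countable_finite)
qed

lemma dif_finite:
  assumes "FAOM L" "A \<in> L" "B \<in> L"
  shows "finite (dif A B)"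
proof -
  have "dif A B \<subseteq> sep A B \<union> zset A \<union> zset B"
    by (auto simp: dif_def sep_def zset_def)
  moreover have "finite (sep A B \<union> zset A \<union> zset B)"
    using assms unfolding FAOM_def by blast
  ultimately show ?thesis using finite_subset by blast
qed

lemma key:
  assumes F: "FAOM L" and AL: "A \<in> L" and BL: "B \<in> L" and n: "card (dif A B) = n" "n > 0"
  shows "\<exists>A' W2 Z W B'. A' \<in> nb L A \<and> W2 \<in> ball L A' n \<and> Z \<in> nb L W2 \<and>
     W \<in> nb L Z \<and> B' \<in> ball L W n \<and> B \<in> nb L B'"
proof -
  define A' where "A' = comp A (sv_neg B)"
  define B' where "B' = comp B (sv_neg A)"
  have A'L: "A' \<in> L" unfolding A'_def using FS F AL BL by blast
  have B'L: "B' \<in> L" unfolding B'_def using FS F AL BL by blast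
  have sepd: "sep A' B' = dif A B"
  proof -
    have "\<And>f. (f \<in> sep A' B') = (f \<in> dif A B)"
    proof -
      fix f
      show "(f \<in> sep A' B') = (f \<in> dif A B)"
        unfolding A'_def B'_def sep_def dif_def comp_def sv_neg_def
        by (cases "A f"; cases "B f") auto
    qed
    thus ?thesis by blast
  qed
  have zeq: "\<And>f. (A' f = Zero) = (B' f = Zero)"
    unfolding A'_def B'_def comp_def sv_neg_def by auto
  have fin: "finite (sep A' B')" using F A'L B'L unfolding FAOM_def by blast
  have "sep A' B' \<noteq> {}" using n sepd by auto
  then obtain e where e: "e \<in> sep A' B'" by blast
  have "Ie e A' B' L \<noteq> {}" using F A'L B'L e unfolding FAOM_def by blast
  then obtain Z where ZL: "Z \<in> L" and Ze: "Z e = Zero"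
    and Zoff: "\<And>f. f \<notin> sep A' B' \<Longrightarrow> Z f = comp A' B' f"
    unfolding Ie_def by blast
  have Zoff2: "Z f = A' f \<and> Z f = B' f" if "f \<notin> sep A' B'" for f
  proof -
    have "Z f = comp A' B' f" using Zoff that .
    moreover have "A' f = Zero \<longleftrightarrow> B' f = Zero" using zeq .
    moreover have "\<not> (A' f \<noteq> Zero \<and> B' f \<noteq> Zero \<and> A' f \<noteq> B' f)" using that unfolding sep_def by blast
    ultimately show ?thesis unfolding comp_def by (cases "A' f = Zero") auto
  qed
  define W2 where "W2 = comp Z (sv_neg B')"
  define W where "W = comp Z (sv_neg A')"
  have W2L: "W2 \<in> L" unfolding W2_def using FS F ZL B'L by blast
  have WL: "W \<in> L" unfolding W_def using FS F ZL A'L by blast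
  have e3: "A' e \<noteq> Zero" "B' e \<noteq> Zero" "A' e \<noteq> B' e" using e unfolding sep_def by auto
  have ee: "A' e = sneg (B' e)" "B' e = sneg (A' e)"
  proof -
    show "A' e = sneg (B' e)" using e3 by (cases "A' e"; cases "B' e"; simp)
    show "B' e = sneg (A' e)" using e3 by (cases "A' e"; cases "B' e"; simp)
  qed
  have d1: "dif A' W2 \<subseteq> sep A' B' - {e}"
  proof
    fix f assume f: "f \<in> dif A' W2"
    show "f \<in> sep A' B' - {e}"
    proof (cases "f = e")
      case True
      have "W2 e = A' e" using ee(1) Ze unfolding W2_def comp_def sv_neg_def by simp
      thus ?thesis using f True unfolding dif_def by simp
    next
      case False
      show ?thesis
      proof (rule ccontr)
        assume "f \<notin> sep A' B' - {e}"
        hence "f \<notin> sep A' B'" using False by blast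
        thus False using Zoff2[of f] f zeq[of f] by (cases "A' f") (auto simp: dif_def W2_def comp_def sv_neg_def)
      qed
    qed
  qed
  have d2: "dif W B' \<subseteq> sep A' B' - {e}"
  proof
    fix f assume f: "f \<in> dif W B'"
    show "f \<in> sep A' B' - {e}"
    proof (cases "f = e")
      case True
      have "W e = B' e" using ee(2) Ze unfolding W_def comp_def sv_neg_def by simp
      thus ?thesis using f True unfolding dif_def by simp
    next
      case False
      show ?thesis
      proof (rule ccontr)
        assume "f \<notin> sep A' B' - {e}"
        hence "f \<notin> sep A' B'" using False by blast
        thus False using Zoff2[of f] f zeq[of f] by (cases "A' f") (auto simp: dif_def W_def comp_def sv_neg_def)
      qed
    qed
  qed
  have cs: "card (sep A' B' - {e}) < n"
    using fin e n sepd by (simp add: card_Diff1_less)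
  have c1: "card (dif A' W2) < n"
    using card_mono[OF finite_Diff[OF fin] d1] cs by linarith
  have c2: "card (dif W B') < n"
    using card_mono[OF finite_Diff[OF fin] d2] cs by linarith
  have "A' \<in> nb L A" using A'L unfolding nb_def sv_le_def A'_def comp_def by auto
  moreover have "W2 \<in> ball L A' n" using W2L c1 unfolding ball_def by auto
  moreover have "Z \<in> nb L W2" using ZL unfolding nb_def sv_le_def W2_def comp_def by auto
  moreover have "W \<in> nb L Z" using WL unfolding nb_def sv_le_def W_def comp_def by auto
  moreover have "B' \<in> ball L W n" using B'L c2 unfolding ball_def by auto
  moreover have "B \<in> nb L B'" using BL unfolding nb_def sv_le_def B'_def comp_def by auto
  ultimately show ?thesis by blast
qed

lemma ball_countable:
  assumes F: "FAOM L"
  shows "\<forall>A\<in>L. countable (ball L A n)"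
proof (induction n)
  case 0
  then show ?case by (simp add: ball_def)
next
  case (Suc n)
  show ?case
  proof
    fix A assume AL: "A \<in> L"
    have nbL: "\<And>Y. nb L Y \<subseteq> L" unfolding nb_def by blast
    have bL: "\<And>Y m. ball L Y m \<subseteq> L" unfolding ball_def by blast
    have sub: "ball L A (Suc n) \<subseteq> {A} \<union> (\<Union>A'\<in>nb L A. \<Union>W2\<in>ball L A' n. \<Union>Z\<in>nb L W2.
       \<Union>W\<in>nb L Z. \<Union>B'\<in>ball L W n. nb L B')"
    proof
      fix B assume B: "B \<in> ball L A (Suc n)"
      hence BL: "B \<in> L" and c: "card (dif A B) < Suc n" unfolding ball_def by auto
      show "B \<in> {A} \<union> (\<Union>A'\<in>nb L A. \<Union>W2\<in>ball L A' n. \<Union>Z\<in>nb L W2.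
       \<Union>W\<in>nb L Z. \<Union>B'\<in>ball L W n. nb L B')"
      proof (cases "card (dif A B) = 0")
        case True
        hence "dif A B = {}" using dif_finite[OF F AL BL] by simp
        hence "B = A" by (auto simp: dif_def fun_eq_iff)
        thus ?thesis by blast
      next
        case False
        then obtain A' W2 Z W B' where h: "A' \<in> nb L A" "W2 \<in> ball L A' (card (dif A B))" "Z \<in> nb L W2"
          "W \<in> nb L Z" "B' \<in> ball L W (card (dif A B))" "B \<in> nb L B'"
          using key[OF F AL BL refl] by blast
        have bb: "\<And>Y X. X \<in> ball L Y (card (dif A B)) \<Longrightarrow> X \<in> ball L Y n"
          using c unfolding ball_def by auto
        have "B \<in> (\<Union>A'\<in>nb L A. \<Union>W2\<in>ball L A' n. \<Union>Z\<in>nb L W2.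
           \<Union>W\<in>nb L Z. \<Union>B'\<in>ball L W n. nb L B')"
          apply (rule UN_I[OF h(1)])
          apply (rule UN_I[OF bb[OF h(2)]])
          apply (rule UN_I[OF h(3)])
          apply (rule UN_I[OF h(4)])
          apply (rule UN_I[OF bb[OF h(5)]])
          apply (rule h(6))
          done
        thus ?thesis by (rule UnI2)
      qed
    qed
    have "countable (\<Union>A'\<in>nb L A. \<Union>W2\<in>ball L A' n. \<Union>Z\<in>nb L W2.
       \<Union>W\<in>nb L Z. \<Union>B'\<in>ball L W n. nb L B')"
      apply (rule countable_UN[OF nb_countable[OF F AL]])
      apply (rule countable_UN[OF Suc.IH[rule_format]], use nbL in blast)
      apply (rule countable_UN[OF nb_countable[OF F]], use bL in blast)
      apply (rule countable_UN[OF nb_countable[OF F]], use nbL in blast)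
      apply (rule countable_UN[OF Suc.IH[rule_format]], use nbL in blast)
      apply (rule nb_countable[OF F], use bL in blast)
      done
    hence "countable ({A} \<union> (\<Union>A'\<in>nb L A. \<Union>W2\<in>ball L A' n. \<Union>Z\<in>nb L W2.
       \<Union>W\<in>nb L Z. \<Union>B'\<in>ball L W n. nb L B'))" by simp
    thus "countable (ball L A (Suc n))"
      by (rule countable_subset[OF sub])
  qed
qed

theorem corollary3p7:
  fixes L :: "'e signvec set"
  assumes "FAOM L"
  shows "countable L"
proof (cases "L = {}")
  case True thus ?thesis by simp
next
  case False
  then obtain X where X: "X \<in> L" by blast
  have "L \<subseteq> (\<Union>n. ball L X n)"
  proof
    fix B assume "B \<in> L"
    hence "B \<in> ball L X (Suc (card (dif X B)))" unfolding ball_def by simp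
    thus "B \<in> (\<Union>n. ball L X n)" by blast
  qed
  moreover have "countable (\<Union>n. ball L X n)"
    using ball_countable[OF assms] X by (intro countable_UN) blast+
  ultimately show ?thesis using countable_subset by blast
qed

end
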